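(* Let $T\in\mathbb{T}$ be a weighted caterpillar that is not a star, with $n$ pendant vertices and $k$ non-pendant vertices $v_1,\dots,v_k$ such that $v_i$ is adjacent to $v_{i+1}$ for $i=1,\dots,k-1$. Let $t_i$ be the number of pendant vertices adjacent to $v_i$. Then the number of edges of $T^{\#}$ is $n+t_1t_2+t_2t_3+\cdots+t_{k-1}t_k$.
   Context: $\mathbb{T}$ is the class of simple undirected weighted trees $T$ (nonzero real weights on edges) such that (i) $T$ has at least one non-pendant vertex, and (ii) every non-pendant vertex of $T$ is adjacent to at least one pendant vertex (a vertex of degree one). A caterpillar is a tree such that deleting all leaves and their incident edges yields a path. The adjacency matrix $A$ of $T$ has $(i,j)$ entry equal to the weight of edge $v_iv_j$, or $0$ if no edge; $A^{\#}$ is its group inverse (unique $X$ with $AXA=A$, $XAX=X$, $AX=XA$); $T^{\#}$ is the weighted graph on the vertex set of $T$ with $v_iv_j$ an edge iff $(A^{\#})_{ij}\neq 0$, weighted by that entry. *)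

theory Defs
  imports "HOL-Analysis.Analysis"
begin

text \<open>A weighted simple undirected graph on the finite vertex type 'v is given by a
  weight function w: vertices u, v are adjacent iff w u v \<noteq> 0, and then w u v is
  the (nonzero real) weight of the edge uv.\<close>

definition weighted_graph :: "('v \<Rightarrow> 'v \<Rightarrow> real) \<Rightarrow> bool" where
  "weighted_graph w \<longleftrightarrow> (\<forall>u v. w u v = w v u) \<and> (\<forall>u. w u u = 0)"

definition adj :: "('v \<Rightarrow> 'v \<Rightarrow> real) \<Rightarrow> 'v \<Rightarrow> 'v \<Rightarrow> bool" where
  "adj w u v \<longleftrightarrow> w u v \<noteq> 0"

definition connected_graph :: "('v \<Rightarrow> 'v \<Rightarrow> real) \<Rightarrow> bool" where
  "connected_graph w \<longleftrightarrow> (\<forall>u v. (u, v) \<in> {(x, y). adj w x y}\<^sup>*)"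

definition is_cycle :: "('v \<Rightarrow> 'v \<Rightarrow> real) \<Rightarrow> 'v list \<Rightarrow> bool" where
  "is_cycle w cs \<longleftrightarrow> length cs \<ge> 3 \<and> distinct cs \<and>
     (\<forall>i. Suc i < length cs \<longrightarrow> adj w (cs ! i) (cs ! Suc i)) \<and>
     adj w (last cs) (hd cs)"

definition is_tree :: "('v::finite \<Rightarrow> 'v \<Rightarrow> real) \<Rightarrow> bool" where
  "is_tree w \<longleftrightarrow> weighted_graph w \<and> connected_graph w \<and> (\<nexists>cs. is_cycle w cs)"

definition degree :: "('v::finite \<Rightarrow> 'v \<Rightarrow> real) \<Rightarrow> 'v \<Rightarrow> nat" where
  "degree w v = card {u. adj w v u}"

definition pendant :: "('v::finite \<Rightarrow> 'v \<Rightarrow> real) \<Rightarrow> 'v \<Rightarrow> bool" where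
  "pendant w v \<longleftrightarrow> degree w v = 1"

definition class_T :: "('v::finite \<Rightarrow> 'v \<Rightarrow> real) \<Rightarrow> bool" where
  "class_T w \<longleftrightarrow> is_tree w \<and> (\<exists>v. \<not> pendant w v) \<and>
     (\<forall>v. \<not> pendant w v \<longrightarrow> (\<exists>u. pendant w u \<and> adj w v u))"

text \<open>Caterpillar: deleting all leaves (and incident edges) yields a path, i.e. the
  non-pendant vertices can be enumerated p 1, ..., p m so that two of them are
  adjacent iff they are consecutive.\<close>
definition caterpillar :: "('v::finite \<Rightarrow> 'v \<Rightarrow> real) \<Rightarrow> bool" where
  "caterpillar w \<longleftrightarrow> is_tree w \<and>
     (\<exists>(m::nat) (p::nat \<Rightarrow> 'v). bij_betw p {1..m} {v. \<not> pendant w v} \<and>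
        (\<forall>i\<in>{1..m}. \<forall>j\<in>{1..m}. adj w (p i) (p j) \<longleftrightarrow> (j = i + 1 \<or> i = j + 1)))"

definition is_star :: "('v::finite \<Rightarrow> 'v \<Rightarrow> real) \<Rightarrow> bool" where
  "is_star w \<longleftrightarrow> is_tree w \<and> (\<exists>c. \<forall>u. u \<noteq> c \<longrightarrow> adj w c u)"

definition adj_matrix :: "('v::finite \<Rightarrow> 'v \<Rightarrow> real) \<Rightarrow> real^'v^'v" where
  "adj_matrix w = (\<chi> i j. w i j)"

definition is_group_inverse :: "real^'n^'n \<Rightarrow> real^'n^'n \<Rightarrow> bool" where
  "is_group_inverse A X \<longleftrightarrow> A ** X ** A = A \<and> X ** A ** X = X \<and> A ** X = X ** A"

definition group_inverse :: "real^'n^'n \<Rightarrow> real^'n^'n" where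
  "group_inverse A = (THE X. is_group_inverse A X)"

text \<open>Edges of the graph whose weights are the entries of a matrix M (T^# for M = A^#).\<close>
definition matrix_graph_edges :: "real^'v^'v \<Rightarrow> 'v set set" where
  "matrix_graph_edges M = {{i, j} | i j. i \<noteq> j \<and> M $ i $ j \<noteq> 0}"

end

theory Submission
  imports Defs
begin

definition nb :: "('v::finite \<Rightarrow> 'v \<Rightarrow> real) \<Rightarrow> 'v \<Rightarrow> 'v" where
  "nb w x = (SOME z. adj w x z)"
definition sw :: "('v::finite \<Rightarrow> 'v \<Rightarrow> real) \<Rightarrow> 'v \<Rightarrow> real" where
  "sw w p = (\<Sum>z\<in>{z. pendant w z}. (w p z)^2)"
definition Cf :: "('v::finite \<Rightarrow> 'v \<Rightarrow> real) \<Rightarrow> 'v \<Rightarrow> 'v \<Rightarrow> real" where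
  "Cf w p y = (if pendant w y then - w y (nb w y) * w p (nb w y) / (sw w p * sw w (nb w y))
               else if y = p then 1 / sw w p else 0)"
definition Xf :: "('v::finite \<Rightarrow> 'v \<Rightarrow> real) \<Rightarrow> 'v \<Rightarrow> 'v \<Rightarrow> real" where
  "Xf w x y = (if pendant w x then w x (nb w x) * Cf w (nb w x) y
               else if pendant w y then w y (nb w y) * Cf w (nb w y) x else 0)"
definition Pm :: "('v::finite \<Rightarrow> 'v \<Rightarrow> real) \<Rightarrow> 'v \<Rightarrow> 'v \<Rightarrow> real" where
  "Pm w x z = (if pendant w x \<and> pendant w z then w x (nb w x) * w z (nb w x) / sw w (nb w x)
               else if \<not> pendant w x \<and> x = z then 1 else 0)"

lemma sw_alt: "sw w p = (\<Sum>z\<in>UNIV. if pendant w z then (w p z)^2 else 0)"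
  unfolding sw_def by (simp add: sum.inter_filter[symmetric])

lemma split_sum: "(\<Sum>z\<in>UNIV. f z) = (\<Sum>z\<in>UNIV. if pendant w z then f z else 0)
   + (\<Sum>z\<in>UNIV. if pendant w z then 0 else (f z :: real))"
  unfolding sum.distrib[symmetric] by (rule sum.cong) auto

lemma gi_unique:
  fixes A X Y :: "real^'n^'n"
  assumes "is_group_inverse A X" "is_group_inverse A Y" shows "X = Y"
proof -
  have x1: "A ** X ** A = A" and x2: "X ** A ** X = X" and x3: "A ** X = X ** A"
    and y1: "A ** Y ** A = A" and y2: "Y ** A ** Y = Y" and y3: "A ** Y = Y ** A"
    using assms unfolding is_group_inverse_def by auto
  have "A ** X = (A ** Y ** A) ** X" by (simp only: y1)
  also have "\<dots> = (Y ** A) ** (A ** X)" by (simp only: y3 matrix_mul_assoc)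
  also have "\<dots> = (Y ** A) ** (X ** A)" by (simp only: x3)
  also have "\<dots> = Y ** (A ** X ** A)" by (simp only: matrix_mul_assoc)
  also have "\<dots> = Y ** A" by (simp only: x1)
  finally have AXY: "A ** X = A ** Y" by (simp only: y3)
  have "X = X ** A ** X" by (simp only: x2)
  also have "\<dots> = X ** (A ** X)" by (simp only: matrix_mul_assoc)
  also have "\<dots> = X ** (A ** Y)" by (simp only: AXY)
  also have "\<dots> = (A ** X) ** Y" by (simp only: x3 matrix_mul_assoc)
  also have "\<dots> = Y ** A ** Y" by (simp only: AXY y3)
  also have "\<dots> = Y" by (simp only: y2)
  finally show ?thesis .
qed

locale cT =
  fixes w :: "'v::finite \<Rightarrow> 'v \<Rightarrow> real"
  assumes symw: "w u v = w v u" and diag: "w u u = 0"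
    and pnb: "pendant w x \<Longrightarrow> adj w x z \<longleftrightarrow> z = nb w x"
    and pnbs: "pendant w x \<Longrightarrow> \<not> pendant w (nb w x)"
    and spos: "\<not> pendant w p \<Longrightarrow> sw w p > 0"
begin

lemma wp0: "pendant w x \<Longrightarrow> z \<noteq> nb w x \<Longrightarrow> w x z = 0"
  using pnb[of x z] unfolding adj_def by auto

lemma wp0': "pendant w x \<Longrightarrow> z \<noteq> nb w x \<Longrightarrow> w z x = 0"
  using wp0[of x z] symw[of z x] by simp

lemma nbw: "pendant w k \<Longrightarrow> w p k \<noteq> 0 \<Longrightarrow> nb w k = p"
  using wp0'[of k p] by auto

lemma Xf_sym: "Xf w x y = Xf w y x"
proof (cases "pendant w x \<and> pendant w y")
  case True
  then show ?thesis using symw[of "nb w x" "nb w y"]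
    by (simp add: Xf_def Cf_def mult_ac)
next
  case False
  then show ?thesis by (auto simp add: Xf_def)
qed

lemma Pm_sym: "Pm w x y = Pm w y x"
proof (cases "pendant w x \<and> pendant w y")
  case True
  show ?thesis
  proof (cases "nb w x = nb w y")
    case True
    then show ?thesis using \<open>pendant w x \<and> pendant w y\<close> unfolding Pm_def by (simp add: mult.commute)
  next
    case False
    have "w y (nb w x) = 0" using wp0[of y "nb w x"] False True by simp
    moreover have "w x (nb w y) = 0" using wp0[of x "nb w y"] False True by simp
    ultimately show ?thesis using True unfolding Pm_def by simp
  qed
qed (auto simp: Pm_def)

lemma AX: "(\<Sum>k\<in>UNIV. w x k * Xf w k y) = Pm w x y"
proof (cases "pendant w x")
  case True
  let ?a = "nb w x"
  have "(\<Sum>k\<in>UNIV. w x k * Xf w k y) = (\<Sum>k\<in>UNIV. if k = ?a then w x ?a * Xf w ?a y else 0)"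
    by (rule sum.cong) (auto simp: wp0[OF True])
  also have "\<dots> = w x ?a * Xf w ?a y" by simp
  also have "\<dots> = Pm w x y"
  proof (cases "pendant w y")
    case py: True
    show ?thesis
    proof (cases "nb w y = ?a")
      case True
      then show ?thesis using py pnbs[of x] \<open>pendant w x\<close> unfolding Xf_def Cf_def Pm_def
        by (auto simp: symw)
    next
      case False
      then show ?thesis using py pnbs[of x] \<open>pendant w x\<close> wp0[OF py, of ?a] unfolding Xf_def Cf_def Pm_def
        by (auto simp: symw)
    qed
  next
    case False
    then show ?thesis using pnbs[of x] \<open>pendant w x\<close> unfolding Xf_def Cf_def Pm_def
        by auto
  qed
  finally show ?thesis .
next
  case False
  note px = False
  have sp: "sw w x \<noteq> 0" using spos[OF False] by simp
  have t1: "(if pendant w k then w x k * Xf w k y else 0) = (if pendant w k then (w x k)^2 else 0) * Cf w x y" for k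
  proof (cases "pendant w k \<and> w x k \<noteq> 0")
    case True
    then have "nb w k = x" using nbw by auto
    then show ?thesis using True unfolding Xf_def by (simp add: symw power2_eq_square)
  qed auto
  show ?thesis
  proof (cases "pendant w y")
    case py: True
    let ?b = "nb w y"
    have t2: "(if pendant w k then 0 else w x k * Xf w k y) = (if k = ?b then w x ?b * w y ?b / sw w ?b else 0)" for k
      using py pnbs[OF py] unfolding Xf_def Cf_def by auto
    have "(\<Sum>k\<in>UNIV. w x k * Xf w k y) = sw w x * Cf w x y + w x ?b * w y ?b / sw w ?b"
      by (subst split_sum[of _ w]) (simp add: t1 t2 sum_distrib_right[symmetric] sw_alt[symmetric])
    also have "\<dots> = 0" using py sp unfolding Cf_def by (simp add: symw)
    also have "\<dots> = Pm w x y" using px py unfolding Pm_def by auto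
    finally show ?thesis .
  next
    case py: False
    have t2: "(if pendant w k then 0 else w x k * Xf w k y) = 0" for k
      using py unfolding Xf_def by auto
    have "(\<Sum>k\<in>UNIV. w x k * Xf w k y) = sw w x * Cf w x y"
      by (subst split_sum[of _ w]) (simp add: t1 t2 sum_distrib_right[symmetric] sw_alt[symmetric])
    also have "\<dots> = Pm w x y" using px py sp unfolding Cf_def Pm_def by auto
    finally show ?thesis .
  qed
qed

lemma XA: "(\<Sum>k\<in>UNIV. Xf w x k * w k y) = Pm w x y"
proof -
  have "(\<Sum>k\<in>UNIV. Xf w x k * w k y) = (\<Sum>k\<in>UNIV. w y k * Xf w k x)"
  proof (rule sum.cong)
    fix k show "Xf w x k * w k y = w y k * Xf w k x"
      using Xf_sym[of x k] symw[of k y] by simp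
  qed simp
  also have "\<dots> = Pm w y x" by (rule AX)
  also have "\<dots> = Pm w x y" by (rule Pm_sym)
  finally show ?thesis .
qed

lemma AXA: "(\<Sum>z\<in>UNIV. Pm w x z * w z y) = w x y"
proof (cases "pendant w x")
  case True
  let ?a = "nb w x"
  define K where "K = (if y = ?a then w x ?a / sw w ?a else 0)"
  have t: "Pm w x z * w z y = (if pendant w z then (w ?a z)^2 else 0) * K" for z
  proof (cases "pendant w z \<and> w ?a z \<noteq> 0")
    case True
    then have nz: "nb w z = ?a" using nbw by auto
    show ?thesis
    proof (cases "y = ?a")
      case True
      then show ?thesis using \<open>pendant w z \<and> w ?a z \<noteq> 0\<close> \<open>pendant w x\<close> unfolding Pm_def K_def
        by (auto simp: symw power2_eq_square)
    next
      case False
      then have "w z y = 0" using wp0[of z y] nz True by auto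
      then show ?thesis using False unfolding K_def by simp
    qed
  next
    case False
    then show ?thesis using \<open>pendant w x\<close> unfolding Pm_def by (auto simp: symw)
  qed
  have sp: "sw w ?a \<noteq> 0" using spos[OF pnbs[OF True]] by simp
  have "(\<Sum>z\<in>UNIV. Pm w x z * w z y) = sw w ?a * K"
    by (simp only: t sum_distrib_right[symmetric] sw_alt[symmetric])
  also have "\<dots> = w x y" using sp wp0[OF True, of y] unfolding K_def by auto
  finally show ?thesis .
next
  case False
  then have "Pm w x z * w z y = (if z = x then w x y else 0)" for z unfolding Pm_def by auto
  then show ?thesis by simp
qed

lemma XAX: "(\<Sum>z\<in>UNIV. Pm w x z * Xf w z y) = Xf w x y"
proof (cases "pendant w x")
  case True
  let ?a = "nb w x"
  define K where "K = w x ?a / sw w ?a * Cf w ?a y"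
  have t: "Pm w x z * Xf w z y = (if pendant w z then (w ?a z)^2 else 0) * K" for z
  proof (cases "pendant w z \<and> w ?a z \<noteq> 0")
    case True
    then have "nb w z = ?a" using nbw by auto
    then show ?thesis using True \<open>pendant w x\<close> unfolding Pm_def Xf_def K_def
      by (auto simp: symw power2_eq_square)
  next
    case False
    then show ?thesis using \<open>pendant w x\<close> unfolding Pm_def by (auto simp: symw)
  qed
  have sp: "sw w ?a \<noteq> 0" using spos[OF pnbs[OF True]] by simp
  have "(\<Sum>z\<in>UNIV. Pm w x z * Xf w z y) = sw w ?a * K"
    by (simp only: t sum_distrib_right[symmetric] sw_alt[symmetric])
  also have "\<dots> = Xf w x y" using sp True unfolding Xf_def K_def by auto
  finally show ?thesis .
next
  case False
  then have "Pm w x z * Xf w z y = (if z = x then Xf w x y else 0)" for z unfolding Pm_def by auto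
  then show ?thesis by simp
qed

lemma group_inv: "group_inverse (adj_matrix w) = (\<chi> i j. Xf w i j)"
proof -
  let ?A = "adj_matrix w" and ?X = "(\<chi> i j. Xf w i j) :: real^'v^'v"
  let ?P = "(\<chi> i j. Pm w i j) :: real^'v^'v"
  have AXe: "?A ** ?X = ?P"
    unfolding matrix_matrix_mult_def adj_matrix_def vec_lambda_beta AX ..
  have XAe: "?X ** ?A = ?P"
    unfolding matrix_matrix_mult_def adj_matrix_def vec_lambda_beta XA ..
  have 1: "?P ** ?A = ?A"
    unfolding matrix_matrix_mult_def adj_matrix_def vec_lambda_beta AXA ..
  have 2: "?P ** ?X = ?X"
    unfolding matrix_matrix_mult_def vec_lambda_beta XAX ..
  have g: "is_group_inverse ?A ?X"
    unfolding is_group_inverse_def AXe XAe 1 2 by simp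
  show ?thesis unfolding group_inverse_def
    using g gi_unique[of ?A] the_equality[of "is_group_inverse ?A" ?X] by blast
qed

end


lemma adj_sym: "weighted_graph w \<Longrightarrow> adj w x y \<longleftrightarrow> adj w y x"
  unfolding weighted_graph_def adj_def by metis

lemma cT_from:
  fixes w :: "'v::finite \<Rightarrow> 'v \<Rightarrow> real"
  assumes cl: "class_T w" shows "cT w"
proof -
  have tr: "weighted_graph w" "connected_graph w" using cl unfolding class_T_def is_tree_def by auto
  have symw: "w u v = w v u" and diag: "w u u = 0" for u v using tr(1) unfolding weighted_graph_def by auto
  have pnb: "adj w x z \<longleftrightarrow> z = nb w x" if px: "pendant w x" for x z
  proof -
    have "card {z. adj w x z} = 1" using px unfolding pendant_def degree_def .
    then obtain c where c: "{z. adj w x z} = {c}" by (rule card_1_singletonE)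
    then have "adj w x c" by auto
    then have "adj w x (nb w x)" unfolding nb_def by (rule someI)
    then have "nb w x = c" using c by auto
    then show ?thesis using c by auto
  qed
  have pnbs: "\<not> pendant w (nb w x)" if px: "pendant w x" for x
  proof
    assume py: "pendant w (nb w x)"
    define y where "y = nb w x"
    have axy: "adj w x y" using pnb[OF px] y_def by simp
    then have "adj w y x" using adj_sym[OF tr(1)] by blast
    then have nby: "nb w y = x" using pnb[OF py] y_def by simp
    have reach: "z \<in> {x, y}" if "(x, z) \<in> {(a, b). adj w a b}\<^sup>*" for z
      using that
    proof (induction rule: rtrancl_induct)
      case base then show ?case by simp
    next
      case (step z z')
      then have "adj w z z'" by simp
      moreover have "pendant w z" using step.IH px py y_def by auto
      ultimately have "z' = nb w z" using pnb by blast
      then show ?case using step.IH nby y_def by auto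
    qed
    obtain u where u: "\<not> pendant w u" using cl unfolding class_T_def by auto
    have "(x, u) \<in> {(a, b). adj w a b}\<^sup>*" using tr(2) unfolding connected_graph_def by blast
    then have "u \<in> {x, y}" by (rule reach)
    then show False using u px py y_def by auto
  qed
  have spos: "sw w p > 0" if np: "\<not> pendant w p" for p
  proof -
    obtain u where u: "pendant w u" "adj w p u" using cl np unfolding class_T_def by auto
    show ?thesis unfolding sw_def
      by (rule sum_pos2[where i = u]) (use u in \<open>auto simp: adj_def\<close>)
  qed
  show ?thesis by unfold_locales (use symw diag pnb pnbs spos in auto)
qed

context cT begin

lemma adjw: "adj w x y \<longleftrightarrow> adj w y x"
  unfolding adj_def using symw by metis

lemma nzX: "Xf w i j \<noteq> 0 \<longleftrightarrow>
   (pendant w i \<and> pendant w j \<and> adj w (nb w i) (nb w j)) \<or> (pendant w i \<and> j = nb w i)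
   \<or> (pendant w j \<and> i = nb w j)"
proof -
  have nz: "w x (nb w x) \<noteq> 0" if "pendant w x" for x using pnb[OF that, of "nb w x"] unfolding adj_def by simp
  have sp: "sw w (nb w x) \<noteq> 0" if "pendant w x" for x using spos[OF pnbs[OF that]] by simp
  have c1: "Xf w i j \<noteq> 0 \<longleftrightarrow> j = nb w i" if "pendant w i" "\<not> pendant w j" for i j
  proof -
    have eq: "Xf w i j = w i (nb w i) * (if j = nb w i then 1 / sw w (nb w i) else 0)"
      using that unfolding Xf_def Cf_def by simp
    show ?thesis unfolding eq using that nz[of i] sp[of i] by (cases "j = nb w i") auto
  qed
  show ?thesis
  proof (cases "pendant w i")
    case pi: True
    show ?thesis
    proof (cases "pendant w j")
      case True
      have "j \<noteq> nb w i" "i \<noteq> nb w j" using pnbs pi True by metis+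
      then show ?thesis using pi True nz[of i] nz[of j] sp[of i] sp[of j] unfolding Xf_def Cf_def adj_def
        by auto
    next
      case False then show ?thesis using c1[OF pi False] pi by auto
    qed
  next
    case False
    show ?thesis
    proof (cases "pendant w j")
      case True
      have "Xf w i j = Xf w j i" by (rule Xf_sym)
      then show ?thesis using c1[of j i] True False by auto
    next
      case False
      show ?thesis using \<open>\<not> pendant w i\<close> False unfolding Xf_def by auto
    qed
  qed
qed

end

lemma spine_nonadj:
  fixes w :: "'v::finite \<Rightarrow> 'v \<Rightarrow> real" and v :: "nat \<Rightarrow> 'v"
  assumes tr: "is_tree w" and inj: "inj_on v {1..k}"
    and ch: "\<forall>i. 1 \<le> i \<and> i < k \<longrightarrow> adj w (v i) (v (i + 1))"
    and ij: "1 \<le> i" "i + 2 \<le> j" "j \<le> k"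
  shows "\<not> adj w (v i) (v j)"
proof
  assume a: "adj w (v i) (v j)"
  have wg: "weighted_graph w" using tr unfolding is_tree_def by auto
  define cs where "cs = map v [i..<Suc j]"
  have len: "length cs = Suc j - i" unfolding cs_def using ij by simp
  have nth: "cs ! m = v (i + m)" if "m < length cs" for m using that ij unfolding len unfolding cs_def by (simp del: upt_Suc)
  have "is_cycle w cs"
    unfolding is_cycle_def
  proof (intro conjI allI impI)
    show "3 \<le> length cs" using len ij by simp
    have "set [i..<Suc j] \<subseteq> {1..k}" using ij by auto
    then have "inj_on v (set [i..<Suc j])" using inj inj_on_subset by blast
    then show "distinct cs" unfolding cs_def by (simp add: distinct_map)
  next
    fix m assume m: "Suc m < length cs"
    then have "1 \<le> i + m \<and> i + m < k" using len ij by simp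
    then have "adj w (v (i + m)) (v (i + m + 1))" using ch by blast
    then show "adj w (cs ! m) (cs ! Suc m)" using m nth[of m] nth[of "Suc m"] by simp
  next
    have "last cs = v j" unfolding cs_def using ij by simp
    moreover have "hd cs = v i" unfolding cs_def using ij by (simp add: hd_map)
    ultimately show "adj w (last cs) (hd cs)" using a adj_sym[OF wg] by simp
  qed
  then show False using tr unfolding is_tree_def by blast
qed

theorem proposition3p12:
  fixes w :: "'v::finite \<Rightarrow> 'v \<Rightarrow> real"
    and k :: nat and v :: "nat \<Rightarrow> 'v"
  assumes "class_T w"
    and "caterpillar w"
    and "\<not> is_star w"
    and "inj_on v {1..k}"
    and "v ` {1..k} = {x. \<not> pendant w x}"
    and "\<forall>i. 1 \<le> i \<and> i < k \<longrightarrow> adj w (v i) (v (i + 1))"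
  shows "card (matrix_graph_edges (group_inverse (adj_matrix w)))
           = card {x. pendant w x}
             + (\<Sum>i = 1..<k. card {x. pendant w x \<and> adj w (v i) x}
                            * card {x. pendant w x \<and> adj w (v (i + 1)) x})"
proof -
  interpret cT w using cT_from[OF assms(1)] .
  have tr: "is_tree w" using assms(1) unfolding class_T_def by auto
  have wg: "weighted_graph w" using tr unfolding is_tree_def by auto
  define P where "P = {x. pendant w x}"
  define Pi where "Pi i = {x. pendant w x \<and> adj w (v i) x}" for i
  have inPi: "x \<in> Pi i \<longleftrightarrow> pendant w x \<and> nb w x = v i" for x i
    unfolding Pi_def using pnb[of x "v i"] adjw[of x "v i"] by auto
  have nbv: "\<exists>i\<in>{1..k}. nb w u = v i" if "pendant w u" for u
    using pnbs[OF that] assms(5) by (metis (mono_tags, lifting) imageE mem_Collect_eq)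
  have spadj: "adj w (v i) (v j) \<longleftrightarrow> j = i + 1 \<or> i = j + 1"
    if "i \<in> {1..k}" "j \<in> {1..k}" for i j
  proof
    assume a: "adj w (v i) (v j)"
    have "i \<noteq> j" using a diag unfolding adj_def by auto
    moreover have "\<not> i + 2 \<le> j" using spine_nonadj[OF tr assms(4) assms(6), of i j] that a by auto
    moreover have "\<not> j + 2 \<le> i" using spine_nonadj[OF tr assms(4) assms(6), of j i] that a adjw by auto
    ultimately show "j = i + 1 \<or> i = j + 1" by auto
  next
    assume "j = i + 1 \<or> i = j + 1"
    then show "adj w (v i) (v j)" using assms(6) that adjw by auto
  qed
  define E1 where "E1 = (\<lambda>u. {u, nb w u}) ` P"
  define E2 where "E2 = {{a, b} | a b. pendant w a \<and> pendant w b \<and> adj w (nb w a) (nb w b)}"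
  define F where "F i = (\<lambda>(a, b). {a, b}) ` (Pi i \<times> Pi (i + 1))" for i
  have gi: "group_inverse (adj_matrix w) = (\<chi> i j. Xf w i j)" by (rule group_inv)
  have E: "matrix_graph_edges (group_inverse (adj_matrix w)) = E1 \<union> E2"
  proof (rule set_eqI)
    fix e
    show "e \<in> matrix_graph_edges (group_inverse (adj_matrix w)) \<longleftrightarrow> e \<in> E1 \<union> E2"
    proof
      assume "e \<in> matrix_graph_edges (group_inverse (adj_matrix w))"
      then obtain i j where e: "e = {i, j}" "i \<noteq> j" "Xf w i j \<noteq> 0"
        unfolding gi matrix_graph_edges_def by auto
      then consider "pendant w i \<and> pendant w j \<and> adj w (nb w i) (nb w j)" | "pendant w i \<and> j = nb w i"
        | "pendant w j \<and> i = nb w j" using nzX by blast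
      then show "e \<in> E1 \<union> E2"
      proof cases
        case 1 then show ?thesis unfolding E2_def using e by blast
      next
        case 2 then show ?thesis unfolding E1_def P_def using e by blast
      next
        case 3 then have "e = {j, nb w j}" using e by auto
        then show ?thesis unfolding E1_def P_def using 3 by blast
      qed
    next
      assume "e \<in> E1 \<union> E2"
      then show "e \<in> matrix_graph_edges (group_inverse (adj_matrix w))"
      proof
        assume "e \<in> E1"
        then obtain u where u: "pendant w u" "e = {u, nb w u}" unfolding E1_def P_def by auto
        have "u \<noteq> nb w u" using pnbs[OF u(1)] u(1) by auto
        moreover have "Xf w u (nb w u) \<noteq> 0" using nzX u(1) by auto
        ultimately show ?thesis unfolding gi matrix_graph_edges_def using u by auto
      next
        assume "e \<in> E2"
        then obtain a b where ab: "e = {a, b}" "pendant w a" "pendant w b" "adj w (nb w a) (nb w b)"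
          unfolding E2_def by auto
        have "a \<noteq> b" using ab diag unfolding adj_def by auto
        moreover have "Xf w a b \<noteq> 0" using nzX ab by auto
        ultimately show ?thesis unfolding gi matrix_graph_edges_def using ab by auto
      qed
    qed
  qed
  have disj: "E1 \<inter> E2 = {}"
  proof -
    have "x \<notin> E2" if "x \<in> E1" for x
    proof
      assume "x \<in> E2"
      then obtain a b where ab: "x = {a, b}" "pendant w a" "pendant w b" unfolding E2_def by auto
      obtain u where u: "pendant w u" "x = {u, nb w u}" using \<open>x \<in> E1\<close> unfolding E1_def P_def by auto
      have "nb w u \<in> {a, b}" using ab u by auto
      then show False using pnbs[OF u(1)] ab by auto
    qed
    then show ?thesis by blast
  qed
  have cE1: "card E1 = card P"
    unfolding E1_def
  proof (rule card_image, rule inj_onI)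
    fix x y assume xy: "x \<in> P" "y \<in> P" "{x, nb w x} = {y, nb w y}"
    then have "x \<noteq> nb w y" using pnbs unfolding P_def by auto
    then show "x = y" using xy(3) by (auto simp: doubleton_eq_iff)
  qed
  have E2U: "E2 = (\<Union>i\<in>{1..<k}. F i)"
  proof (rule set_eqI)
    fix e
    show "e \<in> E2 \<longleftrightarrow> e \<in> (\<Union>i\<in>{1..<k}. F i)"
    proof
      assume "e \<in> E2"
      then obtain a b where ab: "e = {a, b}" "pendant w a" "pendant w b" "adj w (nb w a) (nb w b)"
        unfolding E2_def by auto
      obtain i where i: "i \<in> {1..k}" "nb w a = v i" using nbv ab by blast
      obtain j where j: "j \<in> {1..k}" "nb w b = v j" using nbv ab by blast
      have "j = i + 1 \<or> i = j + 1" using spadj[OF i(1) j(1)] ab i j by simp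
      then show "e \<in> (\<Union>i\<in>{1..<k}. F i)"
      proof
        assume "j = i + 1"
        then have "(a, b) \<in> Pi i \<times> Pi (i + 1)" using inPi ab i j by auto
        then have "e \<in> F i" unfolding F_def using ab by force
        then show ?thesis using i j \<open>j = i + 1\<close> by auto
      next
        assume "i = j + 1"
        then have "(b, a) \<in> Pi j \<times> Pi (j + 1)" using inPi ab i j by auto
        then have "e \<in> F j" unfolding F_def using ab by force
        then show ?thesis using i j \<open>i = j + 1\<close> by auto
      qed
    next
      assume "e \<in> (\<Union>i\<in>{1..<k}. F i)"
      then obtain i a b where i: "i \<in> {1..<k}" and ab: "a \<in> Pi i" "b \<in> Pi (i + 1)" "e = {a, b}"
        unfolding F_def by auto
      have "adj w (v i) (v (i + 1))" using assms(6) i by auto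
      moreover have "pendant w a" "pendant w b" "nb w a = v i" "nb w b = v (i + 1)" using ab inPi by auto
      ultimately have "pendant w a \<and> pendant w b \<and> adj w (nb w a) (nb w b)" by simp
      then show "e \<in> E2" unfolding E2_def using ab(3) by blast
    qed
  qed
  have vinj: "v i = v j \<Longrightarrow> i \<in> {1..k} \<Longrightarrow> j \<in> {1..k} \<Longrightarrow> i = j" for i j
    using assms(4) unfolding inj_on_def by blast
  have cF: "card (F i) = card (Pi i) * card (Pi (i + 1))" if i: "i \<in> {1..<k}" for i
  proof -
    have "inj_on (\<lambda>(a, b). {a, b}) (Pi i \<times> Pi (i + 1))"
    proof (rule inj_onI, clarify)
      fix a b c d assume h: "a \<in> Pi i" "b \<in> Pi (i + 1)" "c \<in> Pi i" "d \<in> Pi (i + 1)" "{a, b} = {c, d}"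
      have "v i \<noteq> v (i + 1)" using vinj[of i "i + 1"] i by auto
      moreover have "nb w a = v i" "nb w d = v (i + 1)" using h inPi by blast+
      ultimately have "a \<noteq> d" by auto
      then show "a = c \<and> b = d" using h(5) by (auto simp: doubleton_eq_iff)
    qed
    then show ?thesis unfolding F_def by (simp add: card_image card_cartesian_product)
  qed
  have cE2: "card E2 = (\<Sum>i = 1..<k. card (Pi i) * card (Pi (i + 1)))"
  proof -
    have "card E2 = (\<Sum>i\<in>{1..<k}. card (F i))"
      unfolding E2U
    proof (rule card_UN_disjoint)
      show "\<forall>i\<in>{1..<k}. \<forall>j\<in>{1..<k}. i \<noteq> j \<longrightarrow> F i \<inter> F j = {}"
      proof (intro ballI impI)
        fix i j assume ij: "i \<in> {1..<k}" "j \<in> {1..<k}" "i \<noteq> j"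
        show "F i \<inter> F j = {}"
        proof (rule ccontr)
          assume "F i \<inter> F j \<noteq> {}"
          then obtain x where x: "x \<in> F i" "x \<in> F j" by blast
          from x(1) obtain a b where h1: "a \<in> Pi i" "b \<in> Pi (i + 1)" "x = {a, b}" unfolding F_def by auto
          from x(2) obtain c d where h2: "c \<in> Pi j" "d \<in> Pi (j + 1)" "x = {c, d}" unfolding F_def by auto
          have h: "a \<in> Pi i" "b \<in> Pi (i + 1)" "c \<in> Pi j" "d \<in> Pi (j + 1)" "{a, b} = {c, d}"
            using h1 h2 by auto
          have na: "nb w a = v i" "nb w b = v (i + 1)" "nb w c = v j" "nb w d = v (j + 1)"
            using h inPi by blast+
          from h(5) have "(a = c \<and> b = d) \<or> (a = d \<and> b = c)" by (auto simp: doubleton_eq_iff)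
          then show False
          proof
            assume "a = c \<and> b = d"
            then have "v i = v j" using na by simp
            then show False using vinj[of i j] ij by auto
          next
            assume "a = d \<and> b = c"
            then have "v i = v (j + 1)" "v (i + 1) = v j" using na by auto
            then show False using vinj[of i "j + 1"] vinj[of "i + 1" j] ij by auto
          qed
        qed
      qed
    qed simp_all
    also have "\<dots> = (\<Sum>i = 1..<k. card (Pi i) * card (Pi (i + 1)))"
      by (rule sum.cong) (auto simp: cF)
    finally show ?thesis .
  qed
  have "card (matrix_graph_edges (group_inverse (adj_matrix w))) = card E1 + card E2"
    unfolding E by (rule card_Un_disjoint) (auto simp: disj)
  then show ?thesis using cE1 cE2 unfolding P_def Pi_def by simp
qed

end
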